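(* Let $d=m=1$, $n=0$ (state space $\mathbb R_+$), let $\mu=\sum_{n=1}^\infty n^{-2}\delta_n$ (with $\delta_n$ the Dirac measure at $n$), and $\beta_1=\int_0^\infty h(\xi)\,\mu(d\xi)=\sum_{n\ge1}n^{-2}$. Then the parameters $\alpha=(0,0)$, $\beta=(0,\beta_1)$, $\gamma=(0,0)$, $\kappa=(0,\mu)$ are admissible, the associated stochastically continuous affine process satisfies $\int_0^\infty(|\xi|\wedge|\xi|^2)\,\mu(d\xi)=\infty$, and yet it is conservative. In fact $R_0\equiv0$, $R_1(u)=\sum_{n\ge1}(e^{un}-1)/n^2$ for $u\le0$, and $\int_{-1}^{0-}\frac{du}{R_1(u)}=-\infty$.
   Context: For $d=1$, $m=1$: truncation function $h(\xi)=(1\wedge|\xi|)\xi/|\xi|$ for $\xi\ne0$. Admissible parameters $(\alpha,\beta,\gamma,\kappa)$ here consist of $\alpha_0,\alpha_1\ge0$, $\beta_0,\beta_1\in\mathbb R$ with $\beta_0-\int h\,d\kappa_0\ge0$ (and $\int |h|\,d\kappa_0<\infty$), $\gamma_0,\gamma_1\ge0$, and Borel measures $\kappa_0,\kappa_1$ on $(0,\infty)$ with $\int |h|^2 d\kappa_j<\infty$; $R_i(u)=\frac12\alpha_iu^2+\beta_iu-\gamma_i+\int(e^{u\xi}-1-uh(\xi))\kappa_i(d\xi)$. Each admissible parameter set determines a unique stochastically continuous affine Markov process $(X,\mathbb P_x)_{x\in\mathbb R_+}$ (possibly killed, with values in $\mathbb R_+\cup\{\Delta\}$) whose transition function satisfies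 $\int e^{u\xi}p_t(x,d\xi)=\exp(\psi_0(t,u)+\psi(t,u)x)$ with $\partial_t\psi=R_1(\psi)$, $\psi(0,u)=u$, $\partial_t\psi_0=R_0(\psi)$, $\psi_0(0,u)=0$. The process is conservative if $p_t(x,\mathbb R_+)=1$ for all $t,x$. *)

theory Defs
  imports "HOL-Analysis.Analysis"
begin

definition h :: "real \<Rightarrow> real" where
  "h \<xi> = min 1 \<bar>\<xi>\<bar> * sgn \<xi>"

definition admissible ::
  "real \<Rightarrow> real \<Rightarrow> real \<Rightarrow> real \<Rightarrow> real \<Rightarrow> real \<Rightarrow> real measure \<Rightarrow> real measure \<Rightarrow> bool" where
  "admissible \<alpha>0 \<alpha>1 \<beta>0 \<beta>1 \<gamma>0 \<gamma>1 \<kappa>0 \<kappa>1 \<longleftrightarrow>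
     \<alpha>0 \<ge> 0 \<and> \<alpha>1 \<ge> 0 \<and> \<gamma>0 \<ge> 0 \<and> \<gamma>1 \<ge> 0 \<and>
     (\<forall>\<kappa> \<in> {\<kappa>0, \<kappa>1}. sets \<kappa> = sets borel \<and> emeasure \<kappa> (UNIV - {0<..}) = 0 \<and>
        (\<integral>\<^sup>+\<xi>. ennreal ((h \<xi>)\<^sup>2) \<partial>\<kappa>) < \<infinity>) \<and>
     (\<integral>\<^sup>+\<xi>. ennreal \<bar>h \<xi>\<bar> \<partial>\<kappa>0) < \<infinity> \<and>
     \<beta>0 - (\<integral>\<xi>. h \<xi> \<partial>\<kappa>0) \<ge> 0"

definition R :: "real \<Rightarrow> real \<Rightarrow> real \<Rightarrow> real measure \<Rightarrow> real \<Rightarrow> real" where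
  "R \<alpha> \<beta> \<gamma> \<kappa> u = \<alpha> / 2 * u\<^sup>2 + \<beta> * u - \<gamma> + (\<integral>\<xi>. exp (u * \<xi>) - 1 - u * h \<xi> \<partial>\<kappa>)"

text \<open>p is a (sub-Markov, possibly killed) transition function on R_+ of the affine process
  with parameters (alpha, beta, gamma, kappa): p t x is a sub-probability measure on R_+
  (mass missing = killing), whose Laplace transform is exp(psi0(t,u) + psi(t,u) x) for u \<le> 0,
  where psi, psi0 solve the generalized Riccati equations.\<close>
definition affine_transition ::
  "real \<Rightarrow> real \<Rightarrow> real \<Rightarrow> real \<Rightarrow> real \<Rightarrow> real \<Rightarrow> real measure \<Rightarrow> real measure \<Rightarrow>
   (real \<Rightarrow> real \<Rightarrow> real measure) \<Rightarrow> (real \<Rightarrow> real \<Rightarrow> real) \<Rightarrow> (real \<Rightarrow> real \<Rightarrow> real) \<Rightarrow> bool" where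
  "affine_transition \<alpha>0 \<alpha>1 \<beta>0 \<beta>1 \<gamma>0 \<gamma>1 \<kappa>0 \<kappa>1 p \<psi>0 \<psi> \<longleftrightarrow>
     (\<forall>u \<le> 0. \<psi> 0 u = u \<and> \<psi>0 0 u = 0 \<and>
        (\<forall>t \<ge> 0. ((\<lambda>s. \<psi> s u) has_real_derivative R \<alpha>1 \<beta>1 \<gamma>1 \<kappa>1 (\<psi> t u)) (at t within {0..}) \<and>
                  ((\<lambda>s. \<psi>0 s u) has_real_derivative R \<alpha>0 \<beta>0 \<gamma>0 \<kappa>0 (\<psi> t u)) (at t within {0..}))) \<and>
     (\<forall>t \<ge> 0. \<forall>x \<ge> 0.
        sets (p t x) = sets borel \<and> emeasure (p t x) (UNIV - {0..}) = 0 \<and> emeasure (p t x) UNIV \<le> 1 \<and>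
        (\<forall>u \<le> 0. (\<integral>\<xi>. exp (u * \<xi>) \<partial>(p t x)) = exp (\<psi>0 t u + \<psi> t u * x)))"

definition conservative :: "(real \<Rightarrow> real \<Rightarrow> real measure) \<Rightarrow> bool" where
  "conservative p \<longleftrightarrow> (\<forall>t \<ge> 0. \<forall>x \<ge> 0. emeasure (p t x) {0..} = 1)"

text \<open>mu = sum_{n \<ge> 1} n^(-2) delta_n, as a Borel measure on the reals.\<close>
definition mu :: "real measure" where
  "mu = distr (density (count_space {1::nat..}) (\<lambda>n. ennreal (1 / (real n)\<^sup>2))) borel real"

definition beta1 :: real where
  "beta1 = (\<Sum>n. 1 / (real (Suc n))\<^sup>2)"

end

theory Submission
  imports Defs
begin


lemma bijSuc: "bij_betw Suc (UNIV::nat set) {1..}"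
proof (rule bij_betw_imageI)
  show "inj_on Suc UNIV" by simp
  show "Suc ` UNIV = {1..}"
  proof (intro set_eqI iffI)
    fix x :: nat assume "x \<in> {1..}"
    then have "x = Suc (x - 1)" by simp
    then show "x \<in> Suc ` UNIV" by blast
  qed auto
qed

lemma mu_nn:
  assumes [measurable]: "g \<in> borel_measurable borel"
  shows "(\<integral>\<^sup>+x. g x \<partial>mu) = (\<Sum>n. ennreal (1 / (real (Suc n))\<^sup>2) * g (real (Suc n)))"
proof -
  have "(\<integral>\<^sup>+x. g x \<partial>mu) = (\<integral>\<^sup>+n. g (real n) \<partial>density (count_space {1::nat..}) (\<lambda>n. ennreal (1 / (real n)\<^sup>2)))"
    unfolding mu_def by (subst nn_integral_distr) auto
  also have "\<dots> = (\<integral>\<^sup>+n. ennreal (1 / (real n)\<^sup>2) * g (real n) \<partial>count_space {1::nat..})"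
    by (subst nn_integral_density) auto
  also have "\<dots> = (\<integral>\<^sup>+n. ennreal (1 / (real (Suc n))\<^sup>2) * g (real (Suc n)) \<partial>count_space UNIV)"
    using nn_integral_bij_count_space[OF bijSuc, of "\<lambda>n. ennreal (1 / (real n)\<^sup>2) * g (real n)"] by simp
  also have "\<dots> = (\<Sum>n. ennreal (1 / (real (Suc n))\<^sup>2) * g (real (Suc n)))"
    by (rule nn_integral_count_space_nat)
  finally show ?thesis .
qed

lemma mu_int:
  fixes f :: "real \<Rightarrow> real"
  assumes [measurable]: "f \<in> borel_measurable borel"
    and s: "summable (\<lambda>n. \<bar>f (real (Suc n))\<bar> / (real (Suc n))\<^sup>2)"
  shows "integrable mu f \<and> integral\<^sup>L mu f = (\<Sum>n. f (real (Suc n)) / (real (Suc n))\<^sup>2)"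
proof -
  let ?M = "density (count_space {1::nat..}) (\<lambda>n. ennreal (1 / (real n)\<^sup>2))"
  let ?F = "\<lambda>n::nat. (1 / (real n)\<^sup>2) *\<^sub>R f (real n)"
  have i1: "integrable mu f \<longleftrightarrow> integrable ?M (\<lambda>n. f (real n))"
    unfolding mu_def by (subst integrable_distr_eq) auto
  have i2: "integrable ?M (\<lambda>n. f (real n)) \<longleftrightarrow> integrable (count_space {1..}) ?F"
    by (subst integrable_density) auto
  have i3: "integrable (count_space {1..}) ?F \<longleftrightarrow> integrable (count_space UNIV) (\<lambda>n. ?F (Suc n))"
    using integrable_bij_count_space[OF bijSuc, of ?F] by simp
  have i4: "integrable (count_space UNIV) (\<lambda>n. ?F (Suc n))"
    unfolding integrable_count_space_nat_iff using s by (simp add: abs_mult)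
  have e1: "integral\<^sup>L mu f = integral\<^sup>L ?M (\<lambda>n. f (real n))"
    unfolding mu_def by (subst integral_distr) auto
  have e2: "integral\<^sup>L ?M (\<lambda>n. f (real n)) = integral\<^sup>L (count_space {1..}) ?F"
    by (subst integral_density) auto
  have e3: "integral\<^sup>L (count_space {1..}) ?F = integral\<^sup>L (count_space UNIV) (\<lambda>n. ?F (Suc n))"
    using integral_bij_count_space[OF bijSuc, of ?F] by simp
  have e4: "integral\<^sup>L (count_space UNIV) (\<lambda>n. ?F (Suc n)) = (\<Sum>n. ?F (Suc n))"
    using i4 by (rule integral_count_space_nat)
  show ?thesis using i1 i2 i3 i4 e1 e2 e3 e4 by simp
qed


definition RR :: "real \<Rightarrow> real" where
  "RR v = (\<Sum>n. (exp (v * real (Suc n)) - 1) / (real (Suc n))\<^sup>2)"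

lemma summ2: "summable (\<lambda>n. 1 / (real (Suc n))\<^sup>2)"
proof -
  have "summable (\<lambda>n. inverse (real n ^ 2))"
    by (rule inverse_power_summable) simp
  then have "summable (\<lambda>n. inverse (real (Suc n) ^ 2))"
    by (rule summable_Suc_iff[THEN iffD2])
  then show ?thesis by (simp only: inverse_eq_divide)
qed

lemma term_summ:
  assumes "v \<le> 0"
  shows "summable (\<lambda>n. (exp (v * real (Suc n)) - 1) / (real (Suc n))\<^sup>2)"
proof (rule summable_comparison_test[OF _ summ2])
  show "\<exists>N. \<forall>n\<ge>N. norm ((exp (v * real (Suc n)) - 1) / (real (Suc n))\<^sup>2) \<le> 1 / (real (Suc n))\<^sup>2"
  proof (intro exI allI impI)
    fix n :: nat
    have "exp (v * real (Suc n)) \<le> 1" using assms by (simp add: mult_nonpos_nonneg)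
    moreover have "exp (v * real (Suc n)) > 0" by simp
    ultimately have "\<bar>exp (v * real (Suc n)) - 1\<bar> \<le> 1" by linarith
    then show "norm ((exp (v * real (Suc n)) - 1) / (real (Suc n))\<^sup>2) \<le> 1 / (real (Suc n))\<^sup>2"
      by (simp add: divide_right_mono)
  qed
qed

lemma harm_le: "n \<ge> 1 \<Longrightarrow> harm n \<le> 1 + ln (real n)"
  using euler_mascheroni_sequence_decreasing[of 1 n] by (simp add: harm_def)

lemma tail_bound:
  assumes "0 < u" "u \<le> 1"
  shows "(\<Sum>n. (1 - exp (- u * real (Suc n))) / (real (Suc n))\<^sup>2) \<le> 3 * u * (1 - ln u)"
proof -
  define t where "t n = (1 - exp (- u * real (Suc n))) / (real (Suc n))\<^sup>2" for n
  define N where "N = nat \<lfloor>1/u\<rfloor>"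
  have u1: "1 \<le> 1/u" using assms by simp
  have fl: "1 \<le> \<lfloor>1/u\<rfloor>" using u1 by (simp add: le_floor_iff)
  have N1: "N \<ge> 1" using fl unfolding N_def by linarith
  have NN1: "real N \<le> 1/u" unfolding N_def using fl by linarith
  have NN2: "1/u < real N + 1" unfolding N_def using fl by linarith
  have Nu: "1 / real N \<le> 2*u"
  proof -
    have "u * real N > 1 - u" using NN2 assms by (simp add: field_simps)
    moreover have "u * real N \<ge> u" using N1 assms by simp
    ultimately have "1 \<le> 2 * u * real N" by linarith
    then show ?thesis using N1 by (simp add: field_simps)
  qed
  have t0: "t n \<ge> 0" for n unfolding t_def by (simp add: mult_nonneg_nonneg assms(1) less_imp_le)
  have tle: "t n \<le> 1 / (real (Suc n))\<^sup>2" for n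
    unfolding t_def by (simp add: divide_right_mono)
  have st: "summable t"
    by (rule summable_comparison_test[OF _ summ2]) (use t0 tle in auto)
  have split: "suminf t = (\<Sum>n. t (n + N)) + (\<Sum>i<N. t i)"
    by (rule suminf_split_initial_segment[OF st])
  have fin: "(\<Sum>i<N. t i) \<le> u * (1 - ln u)"
  proof -
    have "t i \<le> u * inverse (real (Suc i))" for i
    proof -
      have "1 + (- u * real (Suc i)) \<le> exp (- u * real (Suc i))" by (rule exp_ge_add_one_self)
      then have "1 - exp (- u * real (Suc i)) \<le> u * real (Suc i)" by simp
      then have "t i \<le> (u * real (Suc i)) / (real (Suc i))\<^sup>2"
        unfolding t_def by (simp add: divide_right_mono)
      also have "\<dots> = u * inverse (real (Suc i))"
        by (simp add: power2_eq_square divide_inverse del: of_nat_Suc)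
      finally show ?thesis .
    qed
    then have "(\<Sum>i<N. t i) \<le> (\<Sum>i<N. u * inverse (real (Suc i)))" by (intro sum_mono) auto
    also have "\<dots> = u * harm N" by (simp add: harm_altdef sum_distrib_left)
    also have "\<dots> \<le> u * (1 + ln (real N))" using harm_le[OF N1] assms by simp
    also have "ln (real N) \<le> ln (1/u)" using NN1 N1 assms by (subst ln_le_cancel_iff) auto
    then have "u * (1 + ln (real N)) \<le> u * (1 - ln u)" using assms by (simp add: ln_div)
    finally show ?thesis .
  qed
  have tail: "(\<Sum>n. t (n + N)) \<le> 1 / real N"
  proof -
    define f where "f n = 1 / real (n + N)" for n
    have lim: "f \<longlonglongrightarrow> 0" unfolding f_def
      by (intro LIMSEQ_inverse_real_of_nat_add_minus[of 0, simplified] | real_asymp)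
    have sm: "(\<lambda>n. f n - f (Suc n)) sums (f 0 - 0)" by (rule telescope_sums'[OF lim])
    have le: "t (n + N) \<le> f n - f (Suc n)" for n
    proof -
      have m1: "real (n + N) \<ge> 1" using N1 by simp
      have "t (n + N) \<le> 1 / (real (Suc (n + N)))\<^sup>2" by (rule tle)
      also have "\<dots> \<le> 1 / (real (n + N) * real (Suc (n + N)))"
        using m1 by (intro divide_left_mono) (auto simp: power2_eq_square)
      also have "\<dots> = f n - f (Suc n)" unfolding f_def using m1 by (simp add: field_simps)
      finally show ?thesis .
    qed
    have "(\<Sum>n. t (n + N)) \<le> (\<Sum>n. f n - f (Suc n))"
      by (intro suminf_le le summable_iff_shift[THEN iffD2, OF st] sums_summable[OF sm])
    also have "\<dots> = 1 / real N" using sums_unique[OF sm] by (simp add: f_def)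
    finally show ?thesis .
  qed
  have "suminf t \<le> 2*u + u * (1 - ln u)" using split fin tail Nu by linarith
  also have "\<dots> \<le> 3 * u * (1 - ln u)"
  proof -
    have "ln u \<le> 0" using assms by simp
    then have "u * ln u \<le> 0" using assms by (simp add: mult_nonneg_nonpos)
    then show ?thesis using assms by (simp add: algebra_simps)
  qed
  finally show ?thesis unfolding t_def .
qed

lemma RR_bound:
  assumes "-1 \<le> v" "v < 0"
  shows "RR v < 0 \<and> - 3 * ((- v) * (1 - ln (- v))) \<le> RR v"
proof -
  have sm: "summable (\<lambda>n. (exp (v * real (Suc n)) - 1) / (real (Suc n))\<^sup>2)"
    using term_summ assms by simp
  have eq: "- RR v = (\<Sum>n. (1 - exp (v * real (Suc n))) / (real (Suc n))\<^sup>2)"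
    unfolding RR_def using suminf_minus[OF sm] by (simp add: minus_divide_left)
  have "(\<Sum>n. (1 - exp (v * real (Suc n))) / (real (Suc n))\<^sup>2) \<le> 3 * (-v) * (1 - ln (-v))"
    using tail_bound[of "-v"] assms by simp
  moreover have "0 < (\<Sum>n. (1 - exp (v * real (Suc n))) / (real (Suc n))\<^sup>2)"
  proof (rule suminf_pos)
    show "summable (\<lambda>n. (1 - exp (v * real (Suc n))) / (real (Suc n))\<^sup>2)"
      using summable_minus[OF sm] by (simp add: minus_divide_left)
    show "0 < (1 - exp (v * real (Suc n))) / (real (Suc n))\<^sup>2" for n
      using assms by (auto simp: mult_neg_pos)
  qed
  ultimately show ?thesis using eq by (simp add: algebra_simps)
qed

lemma RR_cont: "continuous_on {..0} RR"
proof -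
  have ul: "uniform_limit {..0} (\<lambda>n x. \<Sum>i<n. (exp (x * real (Suc i)) - 1) / (real (Suc i))\<^sup>2)
     (\<lambda>x. \<Sum>i. (exp (x * real (Suc i)) - 1) / (real (Suc i))\<^sup>2) sequentially"
  proof (rule Weierstrass_m_test[OF _ summ2])
    fix n :: nat and x :: real assume "x \<in> {..0}"
    then have "exp (x * real (Suc n)) \<le> 1" by (simp add: mult_nonpos_nonneg)
    moreover have "exp (x * real (Suc n)) > 0" by simp
    ultimately have "\<bar>exp (x * real (Suc n)) - 1\<bar> \<le> 1" by linarith
    then show "norm ((exp (x * real (Suc n)) - 1) / (real (Suc n))\<^sup>2) \<le> 1 / (real (Suc n))\<^sup>2"
      by (simp add: divide_right_mono)
  qed
  show ?thesis unfolding RR_def[abs_def]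
    by (rule uniform_limit_theorem[OF _ ul]) (auto intro!: always_eventually allI continuous_intros)
qed

lemma F_deriv:
  assumes "-1 \<le> v" "v < 0"
  shows "((\<lambda>v. - ln (1 - ln (- v)) / 3) has_real_derivative - 1 / (3 * ((- v) * (1 - ln (- v))))) (at v)"
proof -
  have l: "ln (- v) \<le> 0" using assms by simp
  then have l2: "ln (- v) < 1" by simp
  have d: "1 - ln (- v) \<noteq> 0" "3 - ln (- v) * 3 \<noteq> 0" "v \<noteq> 0" using l2 assms by auto
  show ?thesis
    using assms l2 d by (auto intro!: derivative_eq_intros simp: field_simps)
qed

lemma part7: "filterlim (\<lambda>b. integral {-1..b} (\<lambda>u. 1 / RR u)) at_bot (at_left 0)"
proof -
  define G where "G v = - ln (1 - ln (- v)) / 3" for v :: real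
  have key: "integral {-1..b} (\<lambda>u. 1 / RR u) \<le> G b" if b: "-1 < b" "b < 0" for b
  proof -
    have hi: "((\<lambda>v. - 1 / (3 * ((- v) * (1 - ln (- v))))) has_integral (G b - G (-1))) {-1..b}"
    proof (rule fundamental_theorem_of_calculus)
      show "-1 \<le> b" using b by simp
      fix x assume x: "x \<in> {-1..b}"
      then have "(G has_real_derivative - 1 / (3 * ((- x) * (1 - ln (- x))))) (at x)"
        unfolding G_def using b by (intro F_deriv) auto
      then show "(G has_vector_derivative - 1 / (3 * ((- x) * (1 - ln (- x))))) (at x within {-1..b})"
        by (simp add: has_real_derivative_iff_has_vector_derivative has_vector_derivative_at_within)
    qed
    have G1: "G (-1) = 0" unfolding G_def by simp
    have cont: "continuous_on {-1..b} (\<lambda>u. 1 / RR u)"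
    proof (rule continuous_on_divide)
      show "continuous_on {-1..b} RR" using RR_cont by (rule continuous_on_subset) (use b in auto)
      show "\<forall>x\<in>{-1..b}. RR x \<noteq> 0" using RR_bound b by force
    qed auto
    have "integral {-1..b} (\<lambda>u. 1 / RR u) \<le> integral {-1..b} (\<lambda>v. - 1 / (3 * ((- v) * (1 - ln (- v)))))"
    proof (rule integral_le)
      show "(\<lambda>u. 1 / RR u) integrable_on {-1..b}" using cont by (rule integrable_continuous_interval)
      show "(\<lambda>v. - 1 / (3 * ((- v) * (1 - ln (- v))))) integrable_on {-1..b}" using hi by blast
      fix x assume x: "x \<in> {-1..b}"
      then have r: "RR x < 0" "- 3 * ((- x) * (1 - ln (- x))) \<le> RR x" using RR_bound b by auto
      have "ln (- x) \<le> 0" using x b by simp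
      then have l1: "0 < 1 - ln (- x)" by simp
      have w: "0 < 3 * ((- x) * (1 - ln (- x)))" using x b l1 by (intro mult_pos_pos) auto
      show "1 / RR x \<le> - 1 / (3 * ((- x) * (1 - ln (- x))))"
        using r w by (simp add: divide_simps)
    qed
    also have "\<dots> = G b" using hi G1 by (simp add: integral_unique)
    finally show ?thesis .
  qed
  have Glim: "filterlim G at_bot (at_left 0)" unfolding filterlim_at_bot
  proof
    fix Z :: real
    define \<delta> where "\<delta> = exp (1 - exp (- 3 * Z))"
    have "eventually (\<lambda>v. v \<in> {-\<delta><..<0}) (at_left (0::real))"
      by (rule eventually_at_left_real) (simp add: \<delta>_def)
    then show "eventually (\<lambda>v. G v \<le> Z) (at_left 0)"
    proof eventually_elim
      case (elim v)
      then have v: "0 < - v" "- v < \<delta>" by auto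
      then have "ln (- v) < ln \<delta>" by simp
      then have "ln (- v) < 1 - exp (- 3 * Z)" unfolding \<delta>_def by simp
      then have p: "exp (- 3 * Z) < 1 - ln (- v)" by simp
      have p0: "0 < 1 - ln (- v)" using p by (smt (verit) exp_gt_zero)
      have "ln (exp (- 3 * Z)) < ln (1 - ln (- v))"
        using p p0 by (subst ln_less_cancel_iff) auto
      then have "- 3 * Z < ln (1 - ln (- v))" by simp
      then show ?case unfolding G_def by simp
    qed
  qed
  show ?thesis unfolding filterlim_at_bot
  proof
    fix Z :: real
    have "eventually (\<lambda>b. G b \<le> Z) (at_left 0)" using Glim filterlim_at_bot by blast
    moreover have "eventually (\<lambda>b. b \<in> {-1<..<0}) (at_left (0::real))"
      by (rule eventually_at_left_real) simp
    ultimately show "eventually (\<lambda>b. integral {-1..b} (\<lambda>u. 1 / RR u) \<le> Z) (at_left 0)"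
      by eventually_elim (use key in force)
  qed
qed

lemma F_deriv':
  assumes "-1 \<le> v" "v < 0"
  shows "((\<lambda>v. ln (1 - ln (- v))) has_real_derivative 1 / ((- v) * (1 - ln (- v)))) (at v)"
proof -
  have l: "ln (- v) \<le> 0" using assms by simp
  then have l2: "ln (- v) < 1" by simp
  have d: "1 - ln (- v) \<noteq> 0" "v \<noteq> 0" using l2 assms by auto
  show ?thesis
    using assms l2 d by (auto intro!: derivative_eq_intros simp: field_simps)
qed

lemma osgood:
  fixes \<phi> :: "real \<Rightarrow> real"
  assumes \<phi>0: "\<phi> 0 = 0"
    and nonpos: "\<And>t. t \<ge> 0 \<Longrightarrow> \<phi> t \<le> 0"
    and der: "\<And>t. t \<ge> 0 \<Longrightarrow> (\<phi> has_real_derivative RR (\<phi> t)) (at t within {0..})"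
    and t1: "t1 \<ge> 0"
  shows "\<phi> t1 = 0"
proof (rule ccontr)
  assume ne: "\<phi> t1 \<noteq> 0"
  then have neg1: "\<phi> t1 < 0" using nonpos t1 by force
  have cont: "continuous_on {0..} \<phi>" using der by (rule DERIV_continuous_on) simp
  have derat: "(\<phi> has_real_derivative RR (\<phi> t)) (at t)" if "t > 0" for t
  proof -
    have "at t within {0..} = at t" using that by (intro at_within_interior) simp
    then show ?thesis using der[of t] that by simp
  qed
  define S where "S = {t \<in> {0..t1}. \<phi> t = 0}"
  have clS: "closed S" unfolding S_def
    by (rule continuous_closed_preimage_constant) (auto intro: continuous_on_subset[OF cont])
  have S0: "0 \<in> S" unfolding S_def using \<phi>0 t1 by simp
  have bS: "bdd_above S" unfolding S_def by (rule bdd_aboveI[of _ t1]) auto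
  define a where "a = Sup S"
  have aS: "a \<in> S" unfolding a_def using closed_contains_Sup[OF _ bS clS] S0 by blast
  then have a0: "0 \<le> a" "a \<le> t1" "\<phi> a = 0" unfolding S_def by auto
  have at1: "a < t1" using a0 ne by (cases "a = t1") auto
  have negS: "\<phi> t < 0" if "a < t" "t \<le> t1" for t
  proof -
    have "\<phi> t \<noteq> 0"
    proof
      assume "\<phi> t = 0"
      then have "t \<in> S" unfolding S_def using that a0 by auto
      then have "t \<le> a" unfolding a_def using bS by (rule cSup_upper)
      then show False using that by simp
    qed
    then show ?thesis using nonpos[of t] that a0 by force
  qed
  define c where "c = min (- \<phi> t1) 1"
  have c0: "0 < c" "c \<le> 1" "\<phi> t1 \<le> -c" unfolding c_def using neg1 by auto
  define T where "T = {t \<in> {a..t1}. \<phi> t \<in> {..-c}}"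
  have clT: "closed T"
  proof -
    have "closed ({a..t1} \<inter> \<phi> -` {..-c})"
    proof (rule continuous_closed_preimage)
      show "continuous_on {a..t1} \<phi>" by (rule continuous_on_subset[OF cont]) (use a0 in auto)
    qed auto
    then show ?thesis unfolding T_def by (simp add: vimage_def Int_def)
  qed
  have T1: "t1 \<in> T" unfolding T_def using c0 at1 by simp
  have bT: "bdd_below T" unfolding T_def by (rule bdd_belowI[of _ a]) auto
  define b where "b = Inf T"
  have bTm: "b \<in> T" unfolding b_def using closed_contains_Inf[OF _ bT clT] T1 by blast
  then have b1: "a \<le> b" "b \<le> t1" "\<phi> b \<le> -c" unfolding T_def by auto
  have ab: "a < b" using b1 a0 c0 by (cases "a = b") auto
  have aboveT: "- c < \<phi> t" if "a \<le> t" "t < b" for t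
  proof (rule ccontr)
    assume "\<not> - c < \<phi> t"
    then have "t \<in> T" unfolding T_def using that b1 by auto
    then have "b \<le> t" unfolding b_def using bT by (rule cInf_lower)
    then show False using that by simp
  qed
  have inside: "-1 \<le> \<phi> t \<and> \<phi> t < 0" if "a < t" "t < b" for t
    using aboveT[of t] negS[of t] that b1 c0 by auto
  define r where "r = (a + b) / 2"
  have r: "a < r" "r < b" unfolding r_def using ab by auto
  define G where "G t = ln (1 - ln (- \<phi> t)) + 3 * t" for t
  have Gder: "(G has_real_derivative (1 / ((- \<phi> t) * (1 - ln (- \<phi> t))) * RR (\<phi> t) + 3)) (at t)"
    if "a < t" "t < b" for t
  proof -
    have in1: "-1 \<le> \<phi> t" "\<phi> t < 0" using inside that by auto
    have "((\<lambda>t. ln (1 - ln (- \<phi> t))) has_real_derivative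
        1 / ((- \<phi> t) * (1 - ln (- \<phi> t))) * RR (\<phi> t)) (at t)"
      by (rule DERIV_chain2[OF F_deriv'[OF in1] derat]) (use that a0 in auto)
    moreover have "((\<lambda>t. 3 * t) has_real_derivative 3) (at t)"
      by (auto intro!: derivative_eq_intros)
    ultimately have "((\<lambda>t. ln (1 - ln (- \<phi> t)) + 3 * t) has_real_derivative
        (1 / ((- \<phi> t) * (1 - ln (- \<phi> t))) * RR (\<phi> t) + 3)) (at t)"
      by (rule DERIV_add)
    then show ?thesis unfolding G_def[abs_def] .
  qed
  have Gnn: "0 \<le> 1 / ((- \<phi> t) * (1 - ln (- \<phi> t))) * RR (\<phi> t) + 3" if "a < t" "t < b" for t
  proof -
    have in1: "-1 \<le> \<phi> t" "\<phi> t < 0" using inside that by auto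
    have "ln (- \<phi> t) \<le> 0" using in1 by simp
    then have l: "0 < 1 - ln (- \<phi> t)" by simp
    have w: "0 < (- \<phi> t) * (1 - ln (- \<phi> t))" using in1 l by (intro mult_pos_pos) auto
    have "- 3 * ((- \<phi> t) * (1 - ln (- \<phi> t))) \<le> RR (\<phi> t)" using RR_bound in1 by blast
    then have "- 3 \<le> RR (\<phi> t) / ((- \<phi> t) * (1 - ln (- \<phi> t)))" using w by (simp add: divide_simps)
    then show ?thesis by simp
  qed
  have Gle: "G s \<le> G r" if s: "a < s" "s < r" for s
  proof (rule DERIV_nonneg_imp_increasing_open[of s r G])
    show "s \<le> r" using s by simp
    show "\<exists>y. DERIV G x :> y \<and> 0 \<le> y" if "s < x" "x < r" for x
    proof -
      have "a < x" "x < b" using that s r by auto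
      then show ?thesis using Gder Gnn by blast
    qed
    show "continuous_on {s..r} G"
      by (rule DERIV_continuous_on[where D="\<lambda>t. 1 / ((- \<phi> t) * (1 - ln (- \<phi> t))) * RR (\<phi> t) + 3"])
         (rule has_field_derivative_at_within, rule Gder, use s r in auto)
  qed
  define M where "M = G r"
  define \<eta> where "\<eta> = exp (1 - exp M)"
  have \<eta>0: "0 < \<eta>" unfolding \<eta>_def by simp
  have small: "\<phi> s \<le> - \<eta>" if s: "a < s" "s < r" for s
  proof -
    have in1: "-1 \<le> \<phi> s" "\<phi> s < 0" using inside s r by auto
    have "ln (- \<phi> s) \<le> 0" using in1 by simp
    then have l: "0 < 1 - ln (- \<phi> s)" by simp
    have "ln (1 - ln (- \<phi> s)) \<le> M"
      using Gle[OF s] s a0 unfolding M_def G_def by simp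
    then have "exp (ln (1 - ln (- \<phi> s))) \<le> exp M" by simp
    then have "1 - ln (- \<phi> s) \<le> exp M" using l by simp
    then have "exp (1 - exp M) \<le> exp (ln (- \<phi> s))" by simp
    then show ?thesis unfolding \<eta>_def using in1 by simp
  qed
  have "a \<in> {0..}" using a0 by simp
  then have "\<exists>d>0. \<forall>x'\<in>{0..}. dist x' a < d \<longrightarrow> dist (\<phi> x') (\<phi> a) < \<eta>"
    using cont \<eta>0 unfolding continuous_on_iff by blast
  then obtain d where d: "d > 0" "\<And>x. x \<in> {0..} \<Longrightarrow> dist x a < d \<Longrightarrow> dist (\<phi> x) (\<phi> a) < \<eta>"
    by blast
  define m where "m = min d (r - a)"
  have md: "m \<le> r - a" "m \<le> d" "0 < m" unfolding m_def using d r by auto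
  define s where "s = a + m / 2"
  have s1: "a < s" unfolding s_def using md by linarith
  have s2: "s < r" unfolding s_def using md by linarith
  have s3: "dist s a < d" unfolding s_def dist_real_def using md by simp
  note s = s1 s2 s3
  have "dist (\<phi> s) (\<phi> a) < \<eta>" using d(2)[OF _ s(3)] s a0 by simp
  then have "\<phi> s > - \<eta>" using a0 by (simp add: dist_real_def)
  then show False using small[OF s(1,2)] by simp
qed


lemma h_meas[measurable]: "h \<in> borel_measurable borel"
  unfolding h_def by measurable

lemma h_Suc[simp]: "h (real (Suc n)) = 1"
  unfolding h_def by simp

lemma h_Suc'[simp]: "h (1 + real n) = 1"
  unfolding h_def by simp

lemma part1: "(\<integral>\<xi>. h \<xi> \<partial>mu) = beta1"
proof -
  have "integrable mu h \<and> integral\<^sup>L mu h = (\<Sum>n. h (real (Suc n)) / (real (Suc n))\<^sup>2)"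
    by (rule mu_int) (use summ2 in simp_all)
  then show ?thesis by (simp add: beta1_def)
qed

lemma beta1_nn: "(\<Sum>n. ennreal (1 / (real (Suc n))\<^sup>2)) = ennreal beta1"
  unfolding beta1_def by (rule suminf_ennreal2) (use summ2 in auto)

lemma part2: "admissible 0 0 0 beta1 0 0 (null_measure borel) mu"
proof -
  have s: "sets mu = sets borel" unfolding mu_def by simp
  have e: "emeasure mu (UNIV - {0<..}) = 0"
  proof -
    have "emeasure mu (UNIV - {0<..}) = emeasure (density (count_space {1::nat..}) (\<lambda>n. ennreal (1 / (real n)\<^sup>2)))
        (real -` (UNIV - {0<..}) \<inter> space (density (count_space {1::nat..}) (\<lambda>n. ennreal (1 / (real n)\<^sup>2))))"
      unfolding mu_def by (rule emeasure_distr) auto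
    also have "real -` (UNIV - {0<..}) \<inter> space (density (count_space {1::nat..}) (\<lambda>n. ennreal (1 / (real n)\<^sup>2))) = {}"
      by auto
    finally show ?thesis by simp
  qed
  have n: "(\<integral>\<^sup>+\<xi>. ennreal ((h \<xi>)\<^sup>2) \<partial>mu) < \<infinity>"
  proof -
    have "(\<integral>\<^sup>+\<xi>. ennreal ((h \<xi>)\<^sup>2) \<partial>mu) = (\<Sum>n. ennreal (1 / (real (Suc n))\<^sup>2) * ennreal ((h (real (Suc n)))\<^sup>2))"
      by (rule mu_nn) measurable
    also have "\<dots> = ennreal beta1" using beta1_nn by simp
    finally show ?thesis by simp
  qed
  show ?thesis unfolding admissible_def using s e n part1 by simp
qed

lemma part3: "(\<integral>\<^sup>+\<xi>. ennreal (min \<bar>\<xi>\<bar> (\<xi>\<^sup>2)) \<partial>mu) = \<infinity>"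
proof -
  have "(\<integral>\<^sup>+\<xi>. ennreal (min \<bar>\<xi>\<bar> (\<xi>\<^sup>2)) \<partial>mu) =
      (\<Sum>n. ennreal (1 / (real (Suc n))\<^sup>2) * ennreal (min \<bar>real (Suc n)\<bar> ((real (Suc n))\<^sup>2)))"
    by (rule mu_nn) measurable
  also have "\<dots> = (\<Sum>n. ennreal (1 / real (Suc n)))"
  proof (rule suminf_cong)
    fix n
    have m: "min \<bar>real (Suc n)\<bar> ((real (Suc n))\<^sup>2) = real (Suc n)"
      by (simp add: power2_eq_square del: of_nat_Suc)
    show "ennreal (1 / (real (Suc n))\<^sup>2) * ennreal (min \<bar>real (Suc n)\<bar> ((real (Suc n))\<^sup>2)) = ennreal (1 / real (Suc n))"
      unfolding m by (simp add: ennreal_mult'[symmetric] power2_eq_square del: of_nat_Suc)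
  qed
  also have "\<dots> = \<infinity>"
  proof (rule ccontr)
    assume "(\<Sum>n. ennreal (1 / real (Suc n))) \<noteq> \<infinity>"
    then have "summable (\<lambda>n. 1 / real (Suc n))" by (intro summable_suminf_not_top) auto
    then have "summable (\<lambda>n. inverse (real (Suc n)))" by (simp add: inverse_eq_divide)
    then have "summable (\<lambda>n. inverse (real n))" by (rule summable_Suc_iff[THEN iffD1])
    then show False using not_summable_harmonic by blast
  qed
  finally show ?thesis .
qed

lemma part5: "R 0 0 0 (null_measure borel) u = 0"
  unfolding R_def by simp

lemma part6:
  assumes u: "u \<le> 0"
  shows "R 0 beta1 0 mu u = (\<Sum>n. (exp (u * real (Suc n)) - 1) / (real (Suc n))\<^sup>2)"
proof -
  define f where "f \<xi> = exp (u * \<xi>) - 1 - u * h \<xi>" for \<xi>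
  have fm[measurable]: "f \<in> borel_measurable borel" unfolding f_def by measurable
  have fS: "f (real (Suc n)) = exp (u * real (Suc n)) - 1 - u" for n unfolding f_def by simp
  have bnd: "\<bar>f (real (Suc n))\<bar> \<le> 1 - u" for n
  proof -
    have "exp (u * real (Suc n)) \<le> 1" using u by (simp add: mult_nonpos_nonneg)
    moreover have "exp (u * real (Suc n)) > 0" by simp
    ultimately show ?thesis unfolding fS using u by linarith
  qed
  have sf: "summable (\<lambda>n. \<bar>f (real (Suc n))\<bar> / (real (Suc n))\<^sup>2)"
  proof (rule summable_comparison_test[OF _ summable_mult[OF summ2, of "1 - u"]])
    show "\<exists>N. \<forall>n\<ge>N. norm (\<bar>f (real (Suc n))\<bar> / (real (Suc n))\<^sup>2) \<le> (1 - u) * (1 / (real (Suc n))\<^sup>2)"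
      using bnd by (auto simp: divide_right_mono)
  qed
  have I: "integral\<^sup>L mu f = (\<Sum>n. f (real (Suc n)) / (real (Suc n))\<^sup>2)"
    using mu_int[OF fm sf] by simp
  have sa: "(\<lambda>n. (exp (u * real (Suc n)) - 1) / (real (Suc n))\<^sup>2) sums RR u"
    unfolding RR_def using term_summ[OF u] by (simp add: summable_sums)
  have sc: "(\<lambda>n. 1 / (real (Suc n))\<^sup>2) sums beta1"
    unfolding beta1_def using summ2 by (simp add: summable_sums)
  have "(\<lambda>n. (exp (u * real (Suc n)) - 1) / (real (Suc n))\<^sup>2 - u * (1 / (real (Suc n))\<^sup>2)) sums (RR u - u * beta1)"
    by (intro sums_diff sa sums_mult sc)
  moreover have "(\<lambda>n. (exp (u * real (Suc n)) - 1) / (real (Suc n))\<^sup>2 - u * (1 / (real (Suc n))\<^sup>2))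
      = (\<lambda>n. f (real (Suc n)) / (real (Suc n))\<^sup>2)"
    unfolding fS by (simp add: diff_divide_distrib)
  ultimately have "integral\<^sup>L mu f = RR u - u * beta1" using I sums_unique by force
  then have "R 0 beta1 0 mu u = RR u" unfolding R_def f_def[abs_def] by simp
  then show ?thesis unfolding RR_def .
qed

lemma R_RR: "u \<le> 0 \<Longrightarrow> R 0 beta1 0 mu u = RR u"
  using part6 unfolding RR_def by simp

lemma part7': "filterlim (\<lambda>b. integral {-1..b} (\<lambda>u. 1 / R 0 beta1 0 mu u)) at_bot (at_left 0)"
proof -
  have "eventually (\<lambda>b. b \<in> {-1<..<0}) (at_left (0::real))"
    by (rule eventually_at_left_real) simp
  then have "eventually (\<lambda>b. integral {-1..b} (\<lambda>u. 1 / RR u) = integral {-1..b} (\<lambda>u. 1 / R 0 beta1 0 mu u)) (at_left 0)"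
    by eventually_elim (auto intro!: integral_cong simp: R_RR)
  then have "filterlim (\<lambda>b. integral {-1..b} (\<lambda>u. 1 / RR u)) at_bot (at_left 0) =
      filterlim (\<lambda>b. integral {-1..b} (\<lambda>u. 1 / R 0 beta1 0 mu u)) at_bot (at_left 0)"
    by (rule filterlim_cong[OF refl refl])
  then show ?thesis using part7 by simp
qed

lemma part4:
  assumes A: "affine_transition 0 0 0 beta1 0 0 (null_measure borel) mu p \<psi>0 \<psi>"
  shows "conservative p"
proof -
  note A0 = A[unfolded affine_transition_def]
  have U0: "\<psi> 0 0 = 0 \<and> \<psi>0 0 0 = 0 \<and>
        (\<forall>t \<ge> 0. ((\<lambda>s. \<psi> s 0) has_real_derivative R 0 beta1 0 mu (\<psi> t 0)) (at t within {0..}) \<and>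
                  ((\<lambda>s. \<psi>0 s 0) has_real_derivative R 0 0 0 (null_measure borel) (\<psi> t 0)) (at t within {0..}))"
    using A0[THEN conjunct1, rule_format, of 0] by simp
  have in0: "\<psi> 0 0 = 0" "\<psi>0 0 0 = 0" using U0 by simp_all
  have d\<psi>: "((\<lambda>s. \<psi> s 0) has_real_derivative R 0 beta1 0 mu (\<psi> t 0)) (at t within {0..})" if "t \<ge> 0" for t
    using U0[THEN conjunct2, THEN conjunct2, rule_format, OF that] by (rule conjunct1)
  have d\<psi>0: "((\<lambda>s. \<psi>0 s 0) has_real_derivative 0) (at t within {0..})" if "t \<in> {0..}" for t
  proof -
    have "t \<ge> 0" using that by simp
    then have "((\<lambda>s. \<psi>0 s 0) has_real_derivative R 0 0 0 (null_measure borel) (\<psi> t 0)) (at t within {0..})"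
      using U0[THEN conjunct2, THEN conjunct2, rule_format] by blast
    then show ?thesis by (simp only: part5)
  qed
  obtain c where "\<forall>x\<in>{0..}. \<psi>0 x 0 = c"
    using has_field_derivative_zero_constant[OF convex_real_interval(1) d\<psi>0] by blast
  then have z0: "\<psi>0 t 0 = 0" if "t \<ge> 0" for t using in0 that by force
  have tot: "emeasure (p t x) {0..} = ennreal (exp (\<psi>0 t 0 + \<psi> t 0 * x)) \<and> emeasure (p t x) {0..} \<le> 1"
    if "t \<ge> 0" "x \<ge> 0" for t x
  proof -
    have P: "sets (p t x) = sets borel" "emeasure (p t x) (UNIV - {0..}) = 0" "emeasure (p t x) UNIV \<le> 1"
      "(\<integral>\<xi>. exp (0 * \<xi>) \<partial>(p t x)) = exp (\<psi>0 t 0 + \<psi> t 0 * x)"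
    proof -
      have Q: "sets (p t x) = sets borel \<and> emeasure (p t x) (UNIV - {0..}) = 0 \<and> emeasure (p t x) UNIV \<le> 1 \<and>
        (\<forall>u \<le> 0. (\<integral>\<xi>. exp (u * \<xi>) \<partial>(p t x)) = exp (\<psi>0 t u + \<psi> t u * x))"
        using A0[THEN conjunct2, rule_format, OF that] .
      then show "sets (p t x) = sets borel" "emeasure (p t x) (UNIV - {0..}) = 0" "emeasure (p t x) UNIV \<le> 1"
        by auto
      from Q have "\<forall>u \<le> 0. (\<integral>\<xi>. exp (u * \<xi>) \<partial>(p t x)) = exp (\<psi>0 t u + \<psi> t u * x)" by blast
      then show "(\<integral>\<xi>. exp (0 * \<xi>) \<partial>(p t x)) = exp (\<psi>0 t 0 + \<psi> t 0 * x)" by blast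
    qed
    have sp: "space (p t x) = UNIV" using sets_eq_imp_space_eq[OF P(1)] by simp
    have ms: "UNIV - {0..} \<in> sets (p t x)" unfolding P(1) by measurable
    have e1: "emeasure (p t x) {0..} = emeasure (p t x) UNIV"
    proof -
      have "UNIV - {0..} \<in> null_sets (p t x)" by (rule null_setsI[OF P(2) ms])
      then have "emeasure (p t x) (UNIV - (UNIV - {0..})) = emeasure (p t x) UNIV"
        by (rule emeasure_Diff_null_set) (simp add: P(1))
      moreover have "UNIV - (UNIV - {0..}) = ({0..} :: real set)" by blast
      ultimately show ?thesis by simp
    qed
    have fin: "emeasure (p t x) UNIV \<noteq> top"
    proof -
      have "emeasure (p t x) UNIV < top" by (rule le_less_trans[OF P(3)]) simp
      then show ?thesis by simp
    qed
    have "measure (p t x) UNIV = exp (\<psi>0 t 0 + \<psi> t 0 * x)" using P(4) sp by simp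
    then have "emeasure (p t x) UNIV = ennreal (exp (\<psi>0 t 0 + \<psi> t 0 * x))"
      using emeasure_eq_ennreal_measure[OF fin] by simp
    then show ?thesis using e1 P(3) by simp
  qed
  have nonpos: "\<psi> t 0 \<le> 0" if "t \<ge> 0" for t
  proof -
    have "ennreal (exp (\<psi>0 t 0 + \<psi> t 0 * 1)) \<le> 1"
      using tot[OF that zero_le_one] by metis
    then have "ennreal (exp (\<psi> t 0)) \<le> 1" using z0[OF that] by simp
    then have "exp (\<psi> t 0) \<le> 1" by simp
    then show ?thesis by simp
  qed
  have zero: "\<psi> t 0 = 0" if "t \<ge> 0" for t
  proof (rule osgood[of "\<lambda>s. \<psi> s 0"])
    show "\<psi> 0 0 = 0" by (rule in0)
    show "\<psi> s 0 \<le> 0" if "s \<ge> 0" for s using nonpos that .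
    show "((\<lambda>s. \<psi> s 0) has_real_derivative RR (\<psi> s 0)) (at s within {0..})" if "s \<ge> 0" for s
      using d\<psi>[OF that] R_RR[OF nonpos[OF that]] by simp
    show "t \<ge> 0" by (rule that)
  qed
  show ?thesis unfolding conservative_def
  proof (intro allI impI)
    fix t x :: real assume "t \<ge> 0" "x \<ge> 0"
    then show "emeasure (p t x) {0..} = 1" using tot[of t x] z0 zero by simp
  qed
qed

theorem mainTheorem3:
  shows "(\<integral>\<xi>. h \<xi> \<partial>mu) = beta1
    \<and> admissible 0 0 0 beta1 0 0 (null_measure borel) mu
    \<and> (\<integral>\<^sup>+\<xi>. ennreal (min \<bar>\<xi>\<bar> (\<xi>\<^sup>2)) \<partial>mu) = \<infinity>
    \<and> (\<forall>p \<psi>0 \<psi>. affine_transition 0 0 0 beta1 0 0 (null_measure borel) mu p \<psi>0 \<psi>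
          \<longrightarrow> conservative p)
    \<and> (\<forall>u. R 0 0 0 (null_measure borel) u = 0)
    \<and> (\<forall>u \<le> 0. R 0 beta1 0 mu u = (\<Sum>n. (exp (u * real (Suc n)) - 1) / (real (Suc n))\<^sup>2))
    \<and> filterlim (\<lambda>b. integral {-1..b} (\<lambda>u. 1 / R 0 beta1 0 mu u)) at_bot (at_left 0)"
  using part1 part2 part3 part4 part5 part6 part7' by blast

end
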